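(* Let $(S,\mathfrak{n})$ be a Noetherian local ring, $x_1,\dots,x_r\in S$, and $\Gamma$ a set of monomials in $P=k[T_1,\dots,T_r]$. Let $i_1<i_2$ be positive integers and let $i_3$ be either an integer with $i_3>i_2$ or $i_3=\infty$ (in which case $S$ is assumed complete). Consider: (1) $x_1,\dots,x_r$ is $\Gamma$-expandable from degree $i_1$ to $i_2$; (2) $x_1,\dots,x_r$ is $\Gamma$-expandable from degree $i_1$ to $i_3$; (3) $x_1,\dots,x_r$ is $\Gamma$-expandable from degree $i_2$ to $i_3$. Then any two of (1), (2), (3) imply the third.
   Context: Let $I=(x_1,\dots,x_r)$ and set $I^\infty=0$. For $u=T_1^{a_1}\cdots T_r^{a_r}$ let $u(x)=x_1^{a_1}\cdots x_r^{a_r}$; $\Gamma_k$ is the set of monomials of degree $k$ in $\Gamma$. A lifting is a map $\sigma:S/I\to S$ with $\sigma(0)=0$ and $\pi\circ\sigma=\mathrm{id}_{S/I}$, $\pi:S\to S/I$ the projection. For $0\le i<j<\infty$, $x_1,\dots,x_r$ is $\Gamma$-expandable from degree $i$ to $j$ if for every lifting $\sigma$, every $f\in I^i$ has a unique representation $f\equiv\sum_{u\in\Gamma_k,\,i\le k\le j-1}f_uu(x)\pmod{I^j}$ with all $f_u\in\sigma(S/I)$ (uniqueness of the family $(f_u)$). If $S$ is complete, $x_1,\dots,x_r$ is $\Gamma$-expandable from degree $i$ to $\infty$ if for every lifting $\sigma$ every $f\in I^i$ has a unique representation $f=\sum_{u\in\Gamma_k,\,k\ge i}f_uu(x)$ (convergent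 sum) with all $f_u\in\sigma(S/I)$. *)

theory Defs
  imports "HOL-Library.Extended_Nat"
begin

definition is_ideal :: "'a::comm_ring_1 set \<Rightarrow> bool" where
  "is_ideal J \<longleftrightarrow> 0 \<in> J \<and> (\<forall>a\<in>J. \<forall>b\<in>J. a + b \<in> J) \<and> (\<forall>s. \<forall>a\<in>J. s * a \<in> J)"

definition ideal_gen :: "'a::comm_ring_1 set \<Rightarrow> 'a set" where
  "ideal_gen X = {y. \<exists>F c. finite F \<and> F \<subseteq> X \<and> y = (\<Sum>g\<in>F. c g * g)}"

definition ideal_pow :: "'a::comm_ring_1 set \<Rightarrow> nat \<Rightarrow> 'a set" where
  "ideal_pow J k = ideal_gen {prod_list l | l. length l = k \<and> set l \<subseteq> J}"

definition maximal_ideal :: "'a::comm_ring_1 set \<Rightarrow> bool" where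
  "maximal_ideal M \<longleftrightarrow> is_ideal M \<and> M \<noteq> UNIV \<and>
     (\<forall>J. is_ideal J \<and> M \<subseteq> J \<longrightarrow> J = M \<or> J = UNIV)"

definition noetherian_ring :: "'a::comm_ring_1 itself \<Rightarrow> bool" where
  "noetherian_ring _ \<longleftrightarrow> (\<forall>J::'a set. is_ideal J \<longrightarrow> (\<exists>X. finite X \<and> J = ideal_gen X))"

definition local_ring :: "'a::comm_ring_1 itself \<Rightarrow> bool" where
  "local_ring _ \<longleftrightarrow> (\<exists>!M::'a set. maximal_ideal M)"

definition adic_complete :: "'a::comm_ring_1 set \<Rightarrow> bool" where
  "adic_complete M \<longleftrightarrow> (\<forall>s::nat \<Rightarrow> 'a.
      (\<forall>n. \<exists>N. \<forall>p\<ge>N. \<forall>q\<ge>N. s p - s q \<in> ideal_pow M n) \<longrightarrow>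
      (\<exists>L. \<forall>n. \<exists>N. \<forall>p\<ge>N. s p - L \<in> ideal_pow M n))"

definition monomials :: "nat \<Rightarrow> (nat \<Rightarrow> nat) set" where
  "monomials r = {a. \<forall>i\<ge>r. a i = 0}"

definition mdeg :: "nat \<Rightarrow> (nat \<Rightarrow> nat) \<Rightarrow> nat" where
  "mdeg r a = (\<Sum>i<r. a i)"

definition meval :: "nat \<Rightarrow> (nat \<Rightarrow> 'a::comm_ring_1) \<Rightarrow> (nat \<Rightarrow> nat) \<Rightarrow> 'a" where
  "meval r x a = (\<Prod>i<r. x i ^ a i)"

definition deg_part :: "nat \<Rightarrow> (nat \<Rightarrow> nat) set \<Rightarrow> nat \<Rightarrow> (nat \<Rightarrow> nat) set" where
  "deg_part r \<Gamma> k = {u\<in>\<Gamma>. mdeg r u = k}"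

text \<open>A map S/I -> S is modelled as a map S -> S constant on cosets of I;
  sigma(0) = 0 and pi o sigma = id.  Its image is sigma(S/I).\<close>
definition lifting :: "'a::comm_ring_1 set \<Rightarrow> ('a \<Rightarrow> 'a) \<Rightarrow> bool" where
  "lifting I \<sigma> \<longleftrightarrow> (\<forall>a b. a - b \<in> I \<longrightarrow> \<sigma> a = \<sigma> b) \<and> \<sigma> 0 = 0 \<and> (\<forall>a. \<sigma> a - a \<in> I)"

definition gen_ideal :: "nat \<Rightarrow> (nat \<Rightarrow> 'a::comm_ring_1) \<Rightarrow> 'a set" where
  "gen_ideal r x = ideal_gen (x ` {..<r})"

definition rep_fin ::
  "nat \<Rightarrow> (nat \<Rightarrow> 'a::comm_ring_1) \<Rightarrow> (nat \<Rightarrow> nat) set \<Rightarrow> nat \<Rightarrow> nat \<Rightarrow> ('a \<Rightarrow> 'a) \<Rightarrow> 'a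
   \<Rightarrow> ((nat \<Rightarrow> nat) \<Rightarrow> 'a) \<Rightarrow> bool" where
  "rep_fin r x \<Gamma> i j \<sigma> f c \<longleftrightarrow>
     (\<forall>u\<in>\<Gamma>. i \<le> mdeg r u \<and> mdeg r u < j \<longrightarrow> c u \<in> range \<sigma>) \<and>
     f - (\<Sum>k\<in>{i..<j}. \<Sum>u\<in>deg_part r \<Gamma> k. c u * meval r x u) \<in> ideal_pow (gen_ideal r x) j"

definition rep_inf ::
  "'a::comm_ring_1 set \<Rightarrow> nat \<Rightarrow> (nat \<Rightarrow> 'a) \<Rightarrow> (nat \<Rightarrow> nat) set \<Rightarrow> nat \<Rightarrow> ('a \<Rightarrow> 'a) \<Rightarrow> 'a
   \<Rightarrow> ((nat \<Rightarrow> nat) \<Rightarrow> 'a) \<Rightarrow> bool" where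
  "rep_inf M r x \<Gamma> i \<sigma> f c \<longleftrightarrow>
     (\<forall>u\<in>\<Gamma>. i \<le> mdeg r u \<longrightarrow> c u \<in> range \<sigma>) \<and>
     (\<forall>n. \<exists>N. \<forall>K\<ge>N.
        f - (\<Sum>k\<in>{i..K}. \<Sum>u\<in>deg_part r \<Gamma> k. c u * meval r x u) \<in> ideal_pow M n)"

definition expandable ::
  "'a::comm_ring_1 set \<Rightarrow> nat \<Rightarrow> (nat \<Rightarrow> 'a) \<Rightarrow> (nat \<Rightarrow> nat) set \<Rightarrow> nat \<Rightarrow> enat \<Rightarrow> bool" where
  "expandable M r x \<Gamma> i j \<longleftrightarrow>
     (\<forall>\<sigma>. lifting (gen_ideal r x) \<sigma> \<longrightarrow>
       (\<forall>f \<in> ideal_pow (gen_ideal r x) i.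
         (case j of
            enat j' \<Rightarrow> \<exists>c. rep_fin r x \<Gamma> i j' \<sigma> f c \<and>
                 (\<forall>c'. rep_fin r x \<Gamma> i j' \<sigma> f c' \<longrightarrow>
                    (\<forall>u\<in>\<Gamma>. i \<le> mdeg r u \<and> mdeg r u < j' \<longrightarrow> c' u = c u))
          | \<infinity> \<Rightarrow> \<exists>c. rep_inf M r x \<Gamma> i \<sigma> f c \<and>
                 (\<forall>c'. rep_inf M r x \<Gamma> i \<sigma> f c' \<longrightarrow>
                    (\<forall>u\<in>\<Gamma>. i \<le> mdeg r u \<longrightarrow> c' u = c u)))))"

end

theory Submission
  imports Defs
begin


lemma idl_add: "is_ideal J \<Longrightarrow> a \<in> J \<Longrightarrow> b \<in> J \<Longrightarrow> a + b \<in> J"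
  by (simp add: is_ideal_def)
lemma idl_mult: "is_ideal J \<Longrightarrow> a \<in> J \<Longrightarrow> s * a \<in> J"
  by (simp add: is_ideal_def)
lemma idl_mult2: "is_ideal J \<Longrightarrow> a \<in> J \<Longrightarrow> a * s \<in> J"
  by (metis idl_mult mult.commute)
lemma idl_0: "is_ideal J \<Longrightarrow> 0 \<in> J"
  by (simp add: is_ideal_def)
lemma idl_neg: "is_ideal J \<Longrightarrow> a \<in> J \<Longrightarrow> - a \<in> J"
  using idl_mult[of J a "-1"] by simp
lemma idl_diff: "is_ideal J \<Longrightarrow> a \<in> J \<Longrightarrow> b \<in> J \<Longrightarrow> a - b \<in> J"
  using idl_add[of J a "-b"] idl_neg[of J b] by simp
lemma idl_sum: "is_ideal J \<Longrightarrow> (\<And>a. a \<in> A \<Longrightarrow> f a \<in> J) \<Longrightarrow> sum f A \<in> J"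
proof (cases "finite A")
  case True
  assume J: "is_ideal J" and h: "\<And>a. a \<in> A \<Longrightarrow> f a \<in> J"
  from True h show ?thesis
    by (induction A rule: finite_induct) (auto simp: idl_0[OF J] idl_add[OF J])
qed (simp add: idl_0)
lemma idl_one: "is_ideal J \<Longrightarrow> 1 \<in> J \<Longrightarrow> J = UNIV"
  using idl_mult[of J 1] by auto

lemma gen_ideal_is: "is_ideal (ideal_gen X)"
  unfolding is_ideal_def ideal_gen_def
proof (intro conjI ballI allI)
  show "0 \<in> {y. \<exists>F c. finite F \<and> F \<subseteq> X \<and> y = (\<Sum>g\<in>F. c g * g)}"
    by (rule CollectI, rule exI[of _ "{}"]) auto
next
  fix a b assume a: "a \<in> {y. \<exists>F c. finite F \<and> F \<subseteq> X \<and> y = (\<Sum>g\<in>F. c g * g)}"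
    and b: "b \<in> {y. \<exists>F c. finite F \<and> F \<subseteq> X \<and> y = (\<Sum>g\<in>F. c g * g)}"
  then obtain F1 c1 F2 c2 where 1: "finite F1" "F1 \<subseteq> X" "a = (\<Sum>g\<in>F1. c1 g * g)"
    and 2: "finite F2" "F2 \<subseteq> X" "b = (\<Sum>g\<in>F2. c2 g * g)" by auto
  define d where "d g = (if g \<in> F1 then c1 g else 0) + (if g \<in> F2 then c2 g else 0)" for g
  have fin: "finite (F1 \<union> F2)" using 1 2 by simp
  have e1: "(\<Sum>g\<in>F1\<union>F2. (if g \<in> F1 then c1 g else 0) * g) = a"
  proof -
    have "(\<Sum>g\<in>F1\<union>F2. (if g \<in> F1 then c1 g else 0) * g) = (\<Sum>g\<in>F1\<union>F2. if g \<in> F1 then c1 g * g else 0)"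
      by (rule sum.cong) auto
    also have "\<dots> = (\<Sum>g\<in>(F1\<union>F2) \<inter> F1. c1 g * g)"
      by (rule sum.inter_restrict[OF fin, symmetric])
    also have "(F1\<union>F2) \<inter> F1 = F1" by blast
    finally show ?thesis using 1 by simp
  qed
  have e2: "(\<Sum>g\<in>F1\<union>F2. (if g \<in> F2 then c2 g else 0) * g) = b"
  proof -
    have "(\<Sum>g\<in>F1\<union>F2. (if g \<in> F2 then c2 g else 0) * g) = (\<Sum>g\<in>F1\<union>F2. if g \<in> F2 then c2 g * g else 0)"
      by (rule sum.cong) auto
    also have "\<dots> = (\<Sum>g\<in>(F1\<union>F2) \<inter> F2. c2 g * g)"
      by (rule sum.inter_restrict[OF fin, symmetric])
    also have "(F1\<union>F2) \<inter> F2 = F2" by blast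
    finally show ?thesis using 2 by simp
  qed
  have "a + b = (\<Sum>g\<in>F1\<union>F2. d g * g)"
    unfolding d_def distrib_right sum.distrib e1 e2 ..
  then show "a + b \<in> {y. \<exists>F c. finite F \<and> F \<subseteq> X \<and> y = (\<Sum>g\<in>F. c g * g)}"
    using 1 2 by (intro CollectI exI[of _ "F1 \<union> F2"] exI[of _ d]) auto
next
  fix s a assume a: "a \<in> {y. \<exists>F c. finite F \<and> F \<subseteq> X \<and> y = (\<Sum>g\<in>F. c g * g)}"
  then obtain F c where 1: "finite F" "F \<subseteq> X" "a = (\<Sum>g\<in>F. c g * g)" by auto
  have "s * a = (\<Sum>g\<in>F. (s * c g) * g)" using 1 by (simp add: sum_distrib_left mult.assoc)
  then show "s * a \<in> {y. \<exists>F c. finite F \<and> F \<subseteq> X \<and> y = (\<Sum>g\<in>F. c g * g)}"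
    using 1 by (intro CollectI exI[of _ F] exI[of _ "\<lambda>g. s * c g"]) simp
qed

lemma gen_sub: "X \<subseteq> ideal_gen X"
proof
  fix x assume "x \<in> X"
  then show "x \<in> ideal_gen X" unfolding ideal_gen_def
    by (intro CollectI exI[of _ "{x}"] exI[of _ "\<lambda>_. 1"]) auto
qed

lemma gen_min: "is_ideal K \<Longrightarrow> X \<subseteq> K \<Longrightarrow> ideal_gen X \<subseteq> K"
  unfolding ideal_gen_def by (auto intro!: idl_sum idl_mult)

lemma gen_mult:
  assumes K: "is_ideal K" and a: "a \<in> ideal_gen X" and b: "b \<in> ideal_gen Y"
    and XY: "\<And>x y. x \<in> X \<Longrightarrow> y \<in> Y \<Longrightarrow> x * y \<in> K"
  shows "a * b \<in> K"
proof -
  obtain F1 c1 where 1: "finite F1" "F1 \<subseteq> X" "a = (\<Sum>g\<in>F1. c1 g * g)"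
    using a unfolding ideal_gen_def by auto
  obtain F2 c2 where 2: "finite F2" "F2 \<subseteq> Y" "b = (\<Sum>g\<in>F2. c2 g * g)"
    using b unfolding ideal_gen_def by auto
  have "a * b = (\<Sum>g\<in>F1. \<Sum>h\<in>F2. (c1 g * c2 h) * (g * h))"
    unfolding 1 2 sum_product by (simp add: ac_simps)
  also have "\<dots> \<in> K"
    using 1 2 XY by (intro idl_sum[OF K] idl_mult[OF K] XY) auto
  finally show ?thesis .
qed

lemma pow_is: "is_ideal (ideal_pow J n)"
  unfolding ideal_pow_def by (rule gen_ideal_is)

lemma prod_in_pow: "length l = n \<Longrightarrow> set l \<subseteq> J \<Longrightarrow> prod_list l \<in> ideal_pow J n"
  unfolding ideal_pow_def by (rule subsetD[OF gen_sub]) blast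

lemma pow_mult: "a \<in> ideal_pow J m \<Longrightarrow> b \<in> ideal_pow J n \<Longrightarrow> a * b \<in> ideal_pow J (m + n)"
  unfolding ideal_pow_def[of J m] ideal_pow_def[of J n]
proof (rule gen_mult[OF pow_is])
  fix x y assume "x \<in> {prod_list l |l. length l = m \<and> set l \<subseteq> J}"
    "y \<in> {prod_list l |l. length l = n \<and> set l \<subseteq> J}"
  then obtain l1 l2 where "x = prod_list l1" "length l1 = m" "set l1 \<subseteq> J"
    "y = prod_list l2" "length l2 = n" "set l2 \<subseteq> J" by blast
  then have "prod_list (l1 @ l2) \<in> ideal_pow J (m + n)" by (intro prod_in_pow) auto
  then show "x * y \<in> ideal_pow J (m + n)" using \<open>x = prod_list l1\<close> \<open>y = prod_list l2\<close> by simp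
qed

lemma pow_0: "ideal_pow J 0 = UNIV"
  using prod_in_pow[of "[]" 0 J] idl_one[OF pow_is] by auto

lemma pow_1: "J \<subseteq> ideal_pow J 1"
proof
  fix a assume "a \<in> J" then show "a \<in> ideal_pow J 1" using prod_in_pow[of "[a]" 1 J] by auto
qed

lemma pow_1_eq: assumes J: "is_ideal J" shows "ideal_pow J 1 = J"
proof
  show "ideal_pow J 1 \<subseteq> J" unfolding ideal_pow_def
  proof (rule gen_min[OF J])
    show "{prod_list l |l. length l = 1 \<and> set l \<subseteq> J} \<subseteq> J"
    proof
      fix y assume "y \<in> {prod_list l |l. length l = 1 \<and> set l \<subseteq> J}"
      then obtain l where l: "y = prod_list l" "length l = 1" "set l \<subseteq> J" by blast
      then obtain a where "l = [a]" by (metis One_nat_def length_0_conv length_Suc_conv)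
      then show "y \<in> J" using l by simp
    qed
  qed
qed (rule pow_1)

lemma pow_anti: assumes mn: "m \<le> n" shows "ideal_pow J n \<subseteq> ideal_pow J m"
  unfolding ideal_pow_def[of J n]
proof (rule gen_min[OF pow_is])
  show "{prod_list l |l. length l = n \<and> set l \<subseteq> J} \<subseteq> ideal_pow J m"
  proof
    fix y assume "y \<in> {prod_list l |l. length l = n \<and> set l \<subseteq> J}"
    then obtain l where l: "y = prod_list l" "length l = n" "set l \<subseteq> J" by blast
    have "prod_list l = prod_list (take m l) * prod_list (drop m l)"
      by (metis append_take_drop_id prod_list.append)
    moreover have "prod_list (take m l) \<in> ideal_pow J m"
      using l mn by (intro prod_in_pow) (auto dest: in_set_takeD)
    ultimately show "y \<in> ideal_pow J m" using l by (simp add: idl_mult2[OF pow_is])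
  qed
qed

lemma pow_mono: assumes JK: "J \<subseteq> K" shows "ideal_pow J n \<subseteq> ideal_pow K n"
  unfolding ideal_pow_def[of J]
proof (rule gen_min[OF pow_is])
  show "{prod_list l |l. length l = n \<and> set l \<subseteq> J} \<subseteq> ideal_pow K n"
  proof
    fix y assume "y \<in> {prod_list l |l. length l = n \<and> set l \<subseteq> J}"
    then obtain l where l: "y = prod_list l" "length l = n" "set l \<subseteq> J" by blast
    then show "y \<in> ideal_pow K n" using prod_in_pow[of l n K] JK by blast
  qed
qed



lemma noeth_max:
  assumes noeth: "noetherian_ring TYPE('a::comm_ring_1)" and ne: "F \<noteq> {}"
    and ids: "\<And>A. A \<in> F \<Longrightarrow> is_ideal (A::'a set)"
  shows "\<exists>Q\<in>F. \<forall>B\<in>F. Q \<subseteq> B \<longrightarrow> B = Q"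
proof (rule ccontr)
  assume "\<not> ?thesis"
  then have step: "\<And>A. A \<in> F \<Longrightarrow> \<exists>B. B \<in> F \<and> A \<subset> B" by blast
  obtain A0 where A0: "A0 \<in> F" using ne by auto
  define nx where "nx A = (SOME B. B \<in> F \<and> A \<subset> B)" for A
  have nx: "nx A \<in> F \<and> A \<subset> nx A" if "A \<in> F" for A
    unfolding nx_def by (rule someI_ex[OF step[OF that]])
  define c where "c n = (nx ^^ n) A0" for n
  have cF: "c n \<in> F" for n by (induction n) (auto simp: c_def A0 nx)
  have cS: "c n \<subset> c (Suc n)" for n using nx[OF cF[of n]] by (simp add: c_def)
  have mono: "c m \<subseteq> c n" if "m \<le> n" for m n
    using lift_Suc_mono_le[of c m n] cS that by auto
  define U where "U = \<Union> (range c)"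
  have U: "is_ideal U" unfolding is_ideal_def
  proof (intro conjI ballI allI)
    show "0 \<in> U" unfolding U_def using idl_0[OF ids[OF cF[of 0]]] by blast
  next
    fix a b assume "a \<in> U" "b \<in> U"
    then obtain m n where "a \<in> c m" "b \<in> c n" unfolding U_def by blast
    then have "a \<in> c (max m n)" "b \<in> c (max m n)" using mono[of m "max m n"] mono[of n "max m n"] by auto
    then have "a + b \<in> c (max m n)" by (rule idl_add[OF ids[OF cF]])
    then show "a + b \<in> U" unfolding U_def by blast
  next
    fix s a assume "a \<in> U"
    then obtain m where "a \<in> c m" unfolding U_def by blast
    then have "s * a \<in> c m" by (rule idl_mult[OF ids[OF cF]])
    then show "s * a \<in> U" unfolding U_def by blast
  qed
  obtain X where X: "finite X" "U = ideal_gen X" using noeth U unfolding noetherian_ring_def by blast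
  have XU: "X \<subseteq> U" using X gen_sub by blast
  have "\<exists>N. X \<subseteq> c N" using X(1) XU
  proof (induction X rule: finite_induct)
    case empty then show ?case by auto
  next
    case (insert x X)
    then obtain N m where "X \<subseteq> c N" "x \<in> c m" unfolding U_def by blast
    then have "insert x X \<subseteq> c (max m N)" using mono[of m "max m N"] mono[of N "max m N"] by auto
    then show ?case by blast
  qed
  then obtain N where "X \<subseteq> c N" by blast
  then have "U \<subseteq> c N" using X(2) gen_min[OF ids[OF cF]] by auto
  moreover have "c (Suc N) \<subseteq> U" unfolding U_def by blast
  ultimately show False using cS[of N] by auto
qed

lemma pow_gen_aux:
  "set l \<subseteq> ideal_gen G \<Longrightarrow>
   prod_list l \<in> ideal_gen {prod_list l' | l'. length l' = length l \<and> set l' \<subseteq> G}"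
proof (induction l)
  case Nil
  have "prod_list ([]::'a list) \<in> {prod_list l' | l'. length l' = length ([]::'a list) \<and> set l' \<subseteq> G}"
    by (intro CollectI exI[of _ "[]"]) simp
  then show ?case using gen_sub by (meson subsetD)
next
  case (Cons a l)
  have a: "a \<in> ideal_gen G" and l: "prod_list l \<in> ideal_gen {prod_list l' | l'. length l' = length l \<and> set l' \<subseteq> G}"
    using Cons by auto
  have "a * prod_list l \<in> ideal_gen {prod_list l' | l'. length l' = length (a # l) \<and> set l' \<subseteq> G}"
  proof (rule gen_mult[OF gen_ideal_is a l])
    fix x y assume x: "x \<in> G" and "y \<in> {prod_list l' | l'. length l' = length l \<and> set l' \<subseteq> G}"
    then obtain l' where l': "y = prod_list l'" "length l' = length l" "set l' \<subseteq> G" by blast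
    have "prod_list (x # l') \<in> {prod_list l' | l'. length l' = length (a # l) \<and> set l' \<subseteq> G}"
      using l' x by (intro CollectI exI[of _ "x # l'"]) simp
    then show "x * y \<in> ideal_gen {prod_list l' | l'. length l' = length (a # l) \<and> set l' \<subseteq> G}"
      using l' gen_sub by fastforce
  qed
  then show ?case by simp
qed

lemma pow_gen:
  "ideal_pow (ideal_gen G) n \<subseteq> ideal_gen {prod_list l' | l'. length l' = n \<and> set l' \<subseteq> G}"
  unfolding ideal_pow_def[of "ideal_gen G"]
proof (rule gen_min[OF gen_ideal_is])
  show "{prod_list l |l. length l = n \<and> set l \<subseteq> ideal_gen G} \<subseteq>
        ideal_gen {prod_list l' |l'. length l' = n \<and> set l' \<subseteq> G}"
  proof
    fix y assume "y \<in> {prod_list l |l. length l = n \<and> set l \<subseteq> ideal_gen G}"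
    then obtain l where l: "y = prod_list l" "length l = n" "set l \<subseteq> ideal_gen G" by blast
    show "y \<in> ideal_gen {prod_list l' |l'. length l' = n \<and> set l' \<subseteq> G}"
      using pow_gen_aux[OF l(3)] l by simp
  qed
qed

lemma count_pow: "k \<le> count_list (l::'a::comm_monoid_mult list) g \<Longrightarrow> \<exists>rest. prod_list l = g ^ k * rest"
proof (induction l arbitrary: k)
  case Nil then show ?case by auto
next
  case (Cons a l)
  show ?case
  proof (cases "a = g")
    case True
    show ?thesis
    proof (cases k)
      case 0 then show ?thesis by auto
    next
      case (Suc k')
      then have "k' \<le> count_list l g" using Cons.prems True by simp
      then obtain rest where "prod_list l = g ^ k' * rest" using Cons.IH by blast
      then show ?thesis using True Suc by (auto simp: ac_simps)
    qed
  next
    case False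
    then have "k \<le> count_list l g" using Cons.prems by simp
    then obtain rest where "prod_list l = g ^ k * rest" using Cons.IH by blast
    then have "prod_list (a # l) = g ^ k * (a * rest)" by (simp add: algebra_simps)
    then show ?thesis by blast
  qed
qed

lemma pigeon:
  assumes G: "finite G" and l: "set l \<subseteq> G" and len: "card G * K < length l"
  shows "\<exists>g\<in>G. K \<le> count_list l g"
proof (rule ccontr)
  assume "\<not> ?thesis"
  then have "\<And>g. g \<in> G \<Longrightarrow> count_list l g \<le> K" by auto
  then have "sum (count_list l) G \<le> sum (\<lambda>_. K) G" by (rule sum_mono)
  then have "length l \<le> card G * K" using sum_count_set[OF l G] by simp
  then show False using len by simp
qed

lemma krull:
  fixes M J :: "'a::comm_ring_1 set"
  assumes noeth: "noetherian_ring TYPE('a)" and loc: "local_ring TYPE('a)"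
    and M: "maximal_ideal M" and J: "is_ideal J"
    and y: "\<And>n. \<exists>j\<in>J. y - j \<in> ideal_pow M n"
  shows "y \<in> J"
proof (rule ccontr)
  assume yJ: "y \<notin> J"
  define F where "F = {Q. is_ideal Q \<and> J \<subseteq> Q \<and> y \<notin> Q}"
  have JF: "J \<in> F" using J yJ unfolding F_def by blast
  have Fi: "\<And>A. A \<in> F \<Longrightarrow> is_ideal A" unfolding F_def by simp
  obtain Q where QF: "Q \<in> F" and Qmax: "\<forall>B\<in>F. Q \<subseteq> B \<longrightarrow> B = Q"
    using noeth_max[OF noeth, of F, OF _ Fi] JF by blast
  have Q: "is_ideal Q" and JQ: "J \<subseteq> Q" and yQ: "y \<notin> Q" using QF unfolding F_def by auto
  have big: "y \<in> B" if "is_ideal B" "Q \<subseteq> B" "B \<noteq> Q" for B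
  proof (rule ccontr)
    assume "y \<notin> B"
    then have "B \<in> F" unfolding F_def using that JQ by simp
    then show False using Qmax that by blast
  qed
  define P where "P = {a. a * y \<in> Q}"
  have P: "is_ideal P" unfolding P_def is_ideal_def
    using idl_0[OF Q] idl_add[OF Q] idl_mult[OF Q] by (auto simp: distrib_right mult.assoc)
  have "maximal_ideal P" unfolding maximal_ideal_def
  proof (intro conjI allI impI)
    show "is_ideal P" by (rule P)
    have "1 \<notin> P" using yQ unfolding P_def by simp
    then show "P \<noteq> UNIV" by blast
  next
    fix K assume KP: "is_ideal K \<and> P \<subseteq> K"
    then have K: "is_ideal K" and PK: "P \<subseteq> K" by auto
    show "K = P \<or> K = UNIV"
    proof (cases "K \<subseteq> P")
      case True then show ?thesis using PK by blast
    next
      case False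
      then obtain a where aK: "a \<in> K" and aP: "a \<notin> P" by blast
      define B where "B = {q + (a * y) * s | q s. q \<in> Q}"
      have B: "is_ideal B" unfolding is_ideal_def
      proof (intro conjI ballI allI)
        show "0 \<in> B" unfolding B_def using idl_0[OF Q]
          by (intro CollectI exI[of _ 0] exI[of _ "0::'a"]) simp
      next
        fix b1 b2 assume "b1 \<in> B" "b2 \<in> B"
        then obtain q1 s1 q2 s2 where "b1 = q1 + (a*y)*s1" "q1 \<in> Q" "b2 = q2 + (a*y)*s2" "q2 \<in> Q"
          unfolding B_def by blast
        then show "b1 + b2 \<in> B" unfolding B_def using idl_add[OF Q]
          by (intro CollectI exI[of _ "q1 + q2"] exI[of _ "s1 + s2"]) (simp add: algebra_simps)
      next
        fix t b assume "b \<in> B"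
        then obtain q s where "b = q + (a*y)*s" "q \<in> Q" unfolding B_def by blast
        then show "t * b \<in> B" unfolding B_def using idl_mult[OF Q]
          by (intro CollectI exI[of _ "t * q"] exI[of _ "t * s"]) (simp add: algebra_simps)
      qed
      have QB: "Q \<subseteq> B"
      proof
        fix q assume "q \<in> Q" then show "q \<in> B" unfolding B_def
          by (intro CollectI exI[of _ q] exI[of _ "0::'a"]) simp
      qed
      have "a * y \<in> B" unfolding B_def using idl_0[OF Q]
        by (intro CollectI exI[of _ 0] exI[of _ "1::'a"]) simp
      moreover have "a * y \<notin> Q" using aP unfolding P_def by simp
      ultimately have "B \<noteq> Q" by blast
      then have "y \<in> B" using big[OF B QB] by blast
      then obtain q s where qs: "y = q + (a*y)*s" "q \<in> Q" unfolding B_def by blast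
      then have "(1 - a * s) * y = q" by (simp add: algebra_simps)
      then have "1 - a * s \<in> P" unfolding P_def using qs by simp
      then have "1 - a * s \<in> K" using PK by blast
      moreover have "a * s \<in> K" using idl_mult2[OF K aK] by blast
      ultimately have "(1 - a * s) + a * s \<in> K" by (rule idl_add[OF K])
      then have "1 \<in> K" by simp
      then show ?thesis using idl_one[OF K] by blast
    qed
  qed
  then have PM: "P = M" using loc M unfolding local_ring_def by blast
  have My: "m * y \<in> Q" if "m \<in> M" for m using that PM unfolding P_def by blast
  have Mi: "is_ideal M" using M unfolding maximal_ideal_def by blast
  obtain G where G: "finite G" "M = ideal_gen G" using noeth Mi unfolding noetherian_ring_def by blast
  have gpow: "\<exists>k. g ^ k \<in> Q" if gG: "g \<in> G" for g
  proof -
    have gM: "g \<in> M" using gG G gen_sub by blast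
    define C where "C k = {a. g ^ k * a \<in> Q}" for k
    have Ci: "is_ideal (C k)" for k unfolding C_def is_ideal_def
      using idl_0[OF Q] idl_add[OF Q] idl_mult[OF Q] by (auto simp: distrib_left mult.left_commute)
    have Cm: "C k \<subseteq> C (Suc k)" for k unfolding C_def
      using idl_mult[OF Q] by (auto simp: mult.assoc)
    obtain CN where CN: "CN \<in> range C" and CNmax: "\<forall>B\<in>range C. CN \<subseteq> B \<longrightarrow> B = CN"
      using noeth_max[OF noeth, of "range C"] Ci by blast
    then obtain N where N: "CN = C N" by blast
    have stab: "C n = C N" if "N \<le> n" for n
      using CNmax N lift_Suc_mono_le[of C N n, OF Cm that] by blast
    define k where "k = Suc N"
    have Ck: "C (k + k) = C k" using stab[of k] stab[of "k+k"] unfolding k_def by simp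
    show ?thesis
    proof (rule ccontr)
      assume nk: "\<nexists>k. g ^ k \<in> Q"
      define B where "B = {q + g ^ k * s | q s. q \<in> Q}"
      have B: "is_ideal B" unfolding is_ideal_def
      proof (intro conjI ballI allI)
        show "0 \<in> B" unfolding B_def using idl_0[OF Q]
          by (intro CollectI exI[of _ 0] exI[of _ "0::'a"]) simp
      next
        fix b1 b2 assume "b1 \<in> B" "b2 \<in> B"
        then obtain q1 s1 q2 s2 where "b1 = q1 + g^k*s1" "q1 \<in> Q" "b2 = q2 + g^k*s2" "q2 \<in> Q"
          unfolding B_def by blast
        then show "b1 + b2 \<in> B" unfolding B_def using idl_add[OF Q]
          by (intro CollectI exI[of _ "q1 + q2"] exI[of _ "s1 + s2"]) (simp add: algebra_simps)
      next
        fix t b assume "b \<in> B"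
        then obtain q s where "b = q + g^k*s" "q \<in> Q" unfolding B_def by blast
        then show "t * b \<in> B" unfolding B_def using idl_mult[OF Q]
          by (intro CollectI exI[of _ "t * q"] exI[of _ "t * s"]) (simp add: algebra_simps)
      qed
      have QB: "Q \<subseteq> B"
      proof
        fix q assume "q \<in> Q" then show "q \<in> B" unfolding B_def
          by (intro CollectI exI[of _ q] exI[of _ "0::'a"]) simp
      qed
      have "g ^ k \<in> B" unfolding B_def using idl_0[OF Q]
        by (intro CollectI exI[of _ 0] exI[of _ "1::'a"]) simp
      then have "B \<noteq> Q" using nk by blast
      then have "y \<in> B" using big[OF B QB] by blast
      then obtain q s where qs: "y = q + g^k*s" "q \<in> Q" unfolding B_def by blast
      have "g ^ k * y = g ^ N * (g * y)" unfolding k_def by (simp add: ac_simps)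
      then have gky: "g ^ k * y \<in> Q" using idl_mult[OF Q My[OF gM]] by simp
      have "g ^ (k + k) * s = g ^ k * y - g ^ k * q" using qs by (simp add: algebra_simps power_add)
      moreover have "g ^ k * q \<in> Q" using idl_mult[OF Q qs(2)] by blast
      ultimately have "g ^ (k + k) * s \<in> Q" using idl_diff[OF Q gky] by simp
      then have "s \<in> C k" using Ck unfolding C_def by blast
      then have "g ^ k * s \<in> Q" unfolding C_def by blast
      then have "y \<in> Q" using qs idl_add[OF Q] by simp
      then show False using yQ by blast
    qed
  qed
  obtain kf where kf: "\<And>g. g \<in> G \<Longrightarrow> g ^ kf g \<in> Q" using gpow by metis
  define K where "K = (\<Sum>g\<in>G. kf g)"
  have gK: "g ^ K \<in> Q" if "g \<in> G" for g
  proof -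
    have "kf g \<le> K" unfolding K_def by (rule member_le_sum[OF that]) (use G(1) in auto)
    then have "g ^ K = g ^ kf g * g ^ (K - kf g)" by (simp flip: power_add)
    then show ?thesis using idl_mult2[OF Q kf[OF that]] by simp
  qed
  define n where "n = card G * K + 1"
  have "ideal_pow M n \<subseteq> Q"
  proof -
    have "ideal_gen {prod_list l' | l'. length l' = n \<and> set l' \<subseteq> G} \<subseteq> Q"
    proof (rule gen_min[OF Q], rule subsetI)
      fix z assume "z \<in> {prod_list l' | l'. length l' = n \<and> set l' \<subseteq> G}"
      then obtain l where l: "z = prod_list l" "length l = n" "set l \<subseteq> G" by blast
      obtain g where g: "g \<in> G" "K \<le> count_list l g"
        using pigeon[OF G(1) l(3), of K] l(2) unfolding n_def by auto
      obtain rest where "prod_list l = g ^ K * rest" using count_pow[OF g(2)] by blast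
      then show "z \<in> Q" using l(1) idl_mult2[OF Q gK[OF g(1)]] by simp
    qed
    then show ?thesis using pow_gen[of G n] G(2) by blast
  qed
  moreover obtain j where "j \<in> J" "y - j \<in> ideal_pow M n" using y by blast
  ultimately have "j + (y - j) \<in> Q" using JQ idl_add[OF Q] by blast
  then show False using yQ by simp
qed



definition Sm :: "nat \<Rightarrow> (nat \<Rightarrow> 'a::comm_ring_1) \<Rightarrow> (nat \<Rightarrow> nat) set \<Rightarrow> ((nat \<Rightarrow> nat) \<Rightarrow> 'a) \<Rightarrow> nat \<Rightarrow> nat \<Rightarrow> 'a" where
  "Sm r x \<Gamma> c a b = (\<Sum>k\<in>{a..<b}. \<Sum>u\<in>deg_part r \<Gamma> k. c u * meval r x u)"

definition Cf :: "nat \<Rightarrow> (nat \<Rightarrow> nat) set \<Rightarrow> ('a \<Rightarrow> 'a) \<Rightarrow> nat \<Rightarrow> enat \<Rightarrow> ((nat \<Rightarrow> nat) \<Rightarrow> 'a) \<Rightarrow> bool" where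
  "Cf r \<Gamma> \<sigma> i j c = (\<forall>u\<in>\<Gamma>. i \<le> mdeg r u \<and> enat (mdeg r u) < j \<longrightarrow> c u \<in> range \<sigma>)"

definition Agr :: "nat \<Rightarrow> (nat \<Rightarrow> nat) set \<Rightarrow> nat \<Rightarrow> enat \<Rightarrow> ((nat \<Rightarrow> nat) \<Rightarrow> 'a) \<Rightarrow> ((nat \<Rightarrow> nat) \<Rightarrow> 'a) \<Rightarrow> bool" where
  "Agr r \<Gamma> i j c c' = (\<forall>u\<in>\<Gamma>. i \<le> mdeg r u \<and> enat (mdeg r u) < j \<longrightarrow> c' u = c u)"

definition Rep where
  "Rep M r x \<Gamma> i j \<sigma> f c = (Cf r \<Gamma> \<sigma> i j c \<and>
     (case j of enat j' \<Rightarrow> f - Sm r x \<Gamma> c i j' \<in> ideal_pow (gen_ideal r x) j'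
       | \<infinity> \<Rightarrow> (\<forall>n. \<exists>N. \<forall>K\<ge>N. f - Sm r x \<Gamma> c i (Suc K) \<in> ideal_pow M n)))"

lemma exp_alt: "expandable M r x \<Gamma> i j \<longleftrightarrow>
  (\<forall>\<sigma>. lifting (gen_ideal r x) \<sigma> \<longrightarrow> (\<forall>f\<in>ideal_pow (gen_ideal r x) i.
     \<exists>c. Rep M r x \<Gamma> i j \<sigma> f c \<and> (\<forall>c'. Rep M r x \<Gamma> i j \<sigma> f c' \<longrightarrow> Agr r \<Gamma> i j c c')))"
  by (cases j) (simp_all add: expandable_def Rep_def Agr_def Cf_def rep_fin_def rep_inf_def Sm_def
      atLeastLessThanSuc_atLeastAtMost)

lemma rep_fin_alt: "rep_fin r x \<Gamma> i j \<sigma> f c = Rep M r x \<Gamma> i (enat j) \<sigma> f c"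
  by (simp add: Rep_def rep_fin_def Cf_def Sm_def)

lemma power_in_pow: "a \<in> ideal_pow J 1 \<Longrightarrow> a ^ n \<in> ideal_pow J n"
proof (induction n)
  case 0 then show ?case by (simp add: pow_0)
next
  case (Suc n) then show ?case using pow_mult[of a J 1 "a ^ n" n] by simp
qed

lemma prod_in_pow2: "(\<And>i. i < (n::nat) \<Longrightarrow> x i \<in> J) \<Longrightarrow> (\<Prod>i<n. x i ^ u i) \<in> ideal_pow J (\<Sum>i<n. u i)"
proof (induction n)
  case 0 then show ?case by (simp add: pow_0)
next
  case (Suc n)
  have "(\<Prod>i<n. x i ^ u i) \<in> ideal_pow J (\<Sum>i<n. u i)" using Suc by simp
  moreover have "x n ^ u n \<in> ideal_pow J (u n)"
    by (rule power_in_pow, rule subsetD[OF pow_1], rule Suc.prems) simp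
  ultimately show ?case by (simp add: pow_mult)
qed

lemma meval_in: "meval r x u \<in> ideal_pow (gen_ideal r x) (mdeg r u)"
  unfolding meval_def mdeg_def
proof (rule prod_in_pow2)
  fix i assume "i < r"
  then have "x i \<in> x ` {..<r}" by simp
  then show "x i \<in> gen_ideal r x" unfolding gen_ideal_def by (rule subsetD[OF gen_sub])
qed

lemma Sm_in: "Sm r x \<Gamma> c a b \<in> ideal_pow (gen_ideal r x) a"
  unfolding Sm_def
proof (rule idl_sum[OF pow_is])
  fix k assume k: "k \<in> {a..<b}"
  have "(\<Sum>u\<in>deg_part r \<Gamma> k. c u * meval r x u) \<in> ideal_pow (gen_ideal r x) k"
    by (rule idl_sum[OF pow_is], rule idl_mult[OF pow_is]) (use meval_in in \<open>auto simp: deg_part_def\<close>)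
  then show "(\<Sum>u\<in>deg_part r \<Gamma> k. c u * meval r x u) \<in> ideal_pow (gen_ideal r x) a"
    using pow_anti[of a k] k by auto
qed

lemma Sm_split: "a \<le> b \<Longrightarrow> b \<le> d \<Longrightarrow> Sm r x \<Gamma> c a b + Sm r x \<Gamma> c b d = Sm r x \<Gamma> c a d"
  unfolding Sm_def by (rule sum.atLeastLessThan_concat)

lemma Sm_cong: "(\<And>u. u \<in> \<Gamma> \<Longrightarrow> a \<le> mdeg r u \<Longrightarrow> mdeg r u < b \<Longrightarrow> c u = d u) \<Longrightarrow>
   Sm r x \<Gamma> c a b = Sm r x \<Gamma> d a b"
  unfolding Sm_def by (intro sum.cong refl) (auto simp: deg_part_def)

lemma Sm_zero: "(\<And>u. u \<in> \<Gamma> \<Longrightarrow> a \<le> mdeg r u \<Longrightarrow> mdeg r u < b \<Longrightarrow> c u = 0) \<Longrightarrow>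
   Sm r x \<Gamma> c a b = 0"
  unfolding Sm_def by (intro sum.neutral) (auto simp: deg_part_def)

lemma trunc:
  fixes M :: "'a::comm_ring_1 set"
  assumes noeth: "noetherian_ring TYPE('a)" and loc: "local_ring TYPE('a)" and M: "maximal_ideal M"
    and i12: "i1 \<le> i2" and j: "enat i2 \<le> j" and R: "Rep M r x \<Gamma> i1 j \<sigma> f c"
  shows "Rep M r x \<Gamma> i1 (enat i2) \<sigma> f c"
proof -
  let ?I = "gen_ideal r x"
  have cf: "Cf r \<Gamma> \<sigma> i1 (enat i2) c" using R j unfolding Rep_def Cf_def
    by (meson order_less_le_trans)
  have "f - Sm r x \<Gamma> c i1 i2 \<in> ideal_pow ?I i2"
  proof (cases j)
    case (enat j')
    then have f: "f - Sm r x \<Gamma> c i1 j' \<in> ideal_pow ?I j'" using R unfolding Rep_def by simp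
    have ij: "i2 \<le> j'" using j enat by simp
    have eq: "f - Sm r x \<Gamma> c i1 i2 = (f - Sm r x \<Gamma> c i1 j') + Sm r x \<Gamma> c i2 j'"
      using Sm_split[OF i12 ij, of r x \<Gamma> c] by (simp add: algebra_simps)
    have "f - Sm r x \<Gamma> c i1 j' \<in> ideal_pow ?I i2" using f pow_anti[OF ij] by blast
    then show ?thesis unfolding eq by (rule idl_add[OF pow_is]) (rule Sm_in)
  next
    case infinity
    then have f: "\<forall>n. \<exists>N. \<forall>K\<ge>N. f - Sm r x \<Gamma> c i1 (Suc K) \<in> ideal_pow M n"
      using R unfolding Rep_def by simp
    show ?thesis
    proof (rule krull[OF noeth loc M pow_is])
      fix n
      obtain N where N: "\<forall>K\<ge>N. f - Sm r x \<Gamma> c i1 (Suc K) \<in> ideal_pow M n" using f by blast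
      let ?K = "max N i2"
      have eq: "f - Sm r x \<Gamma> c i1 i2 - Sm r x \<Gamma> c i2 (Suc ?K) = f - Sm r x \<Gamma> c i1 (Suc ?K)"
        using Sm_split[OF i12, of "Suc ?K" r x \<Gamma> c] by (simp add: algebra_simps)
      have "f - Sm r x \<Gamma> c i1 i2 - Sm r x \<Gamma> c i2 (Suc ?K) \<in> ideal_pow M n"
        unfolding eq using N by (meson max.cobounded1)
      then show "\<exists>j\<in>ideal_pow ?I i2. f - Sm r x \<Gamma> c i1 i2 - j \<in> ideal_pow M n"
        by (rule bexI[OF _ Sm_in])
    qed
  qed
  then show ?thesis using cf unfolding Rep_def by simp
qed

lemma split_rep:
  assumes i12: "i1 \<le> i2" and j: "enat i2 \<le> j" and R: "Rep M r x \<Gamma> i1 j \<sigma> f c"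
  shows "Rep M r x \<Gamma> i2 j \<sigma> (f - Sm r x \<Gamma> c i1 i2) c"
proof -
  have cf: "Cf r \<Gamma> \<sigma> i2 j c" using R i12 unfolding Rep_def Cf_def by auto
  show ?thesis
  proof (cases j)
    case (enat j')
    then have f: "f - Sm r x \<Gamma> c i1 j' \<in> ideal_pow (gen_ideal r x) j'" using R unfolding Rep_def by simp
    have ij: "i2 \<le> j'" using j enat by simp
    have eq: "f - Sm r x \<Gamma> c i1 i2 - Sm r x \<Gamma> c i2 j' = f - Sm r x \<Gamma> c i1 j'"
      using Sm_split[OF i12 ij, of r x \<Gamma> c] by (simp add: algebra_simps)
    show ?thesis using cf enat unfolding Rep_def by (simp only: eq f enat.case simp_thms)
  next
    case infinity
    then have f: "\<forall>n. \<exists>N. \<forall>K\<ge>N. f - Sm r x \<Gamma> c i1 (Suc K) \<in> ideal_pow M n"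
      using R unfolding Rep_def by simp
    have "\<exists>N. \<forall>K\<ge>N. f - Sm r x \<Gamma> c i1 i2 - Sm r x \<Gamma> c i2 (Suc K) \<in> ideal_pow M n" for n
    proof -
      obtain N where N: "\<forall>K\<ge>N. f - Sm r x \<Gamma> c i1 (Suc K) \<in> ideal_pow M n" using f by blast
      have "f - Sm r x \<Gamma> c i1 i2 - Sm r x \<Gamma> c i2 (Suc K) \<in> ideal_pow M n" if K: "K \<ge> max N i2" for K
      proof -
        have eq: "f - Sm r x \<Gamma> c i1 i2 - Sm r x \<Gamma> c i2 (Suc K) = f - Sm r x \<Gamma> c i1 (Suc K)"
          using Sm_split[OF i12, of "Suc K" r x \<Gamma> c] K by (simp add: algebra_simps)
        show ?thesis unfolding eq using N K by (meson max.boundedE le_SucI)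
      qed
      then show ?thesis by blast
    qed
    then show ?thesis using cf infinity unfolding Rep_def by simp
  qed
qed

lemma comb:
  assumes i12: "i1 \<le> i2" and j: "enat i2 \<le> j" and D: "Rep M r x \<Gamma> i1 (enat i2) \<sigma> f d"
    and E: "Rep M r x \<Gamma> i2 j \<sigma> (f - Sm r x \<Gamma> d i1 i2) e"
  shows "Rep M r x \<Gamma> i1 j \<sigma> f (\<lambda>u. if mdeg r u < i2 then d u else e u)"
proof -
  define c where "c = (\<lambda>u. if mdeg r u < i2 then d u else e u)"
  have cf: "Cf r \<Gamma> \<sigma> i1 j c" using D E unfolding Rep_def Cf_def c_def by auto
  have s1: "Sm r x \<Gamma> c i1 i2 = Sm r x \<Gamma> d i1 i2" by (rule Sm_cong) (simp add: c_def)
  have s2: "Sm r x \<Gamma> c i2 K = Sm r x \<Gamma> e i2 K" for K by (rule Sm_cong) (simp add: c_def)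
  have key: "f - Sm r x \<Gamma> c i1 K = (f - Sm r x \<Gamma> d i1 i2) - Sm r x \<Gamma> e i2 K" if "i2 \<le> K" for K
    using Sm_split[OF i12 that, of r x \<Gamma> c] s1 s2[of K] by (simp add: algebra_simps)
  show ?thesis
  proof (cases j)
    case (enat j')
    have ij: "i2 \<le> j'" using j enat by simp
    then have "f - Sm r x \<Gamma> c i1 j' \<in> ideal_pow (gen_ideal r x) j'"
      unfolding key[OF ij] using E enat unfolding Rep_def by simp
    then show ?thesis using cf enat unfolding Rep_def c_def by simp
  next
    case infinity
    then have f: "\<forall>n. \<exists>N. \<forall>K\<ge>N. (f - Sm r x \<Gamma> d i1 i2) - Sm r x \<Gamma> e i2 (Suc K) \<in> ideal_pow M n"
      using E unfolding Rep_def by simp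
    have "\<exists>N. \<forall>K\<ge>N. f - Sm r x \<Gamma> c i1 (Suc K) \<in> ideal_pow M n" for n
    proof -
      obtain N where N: "\<forall>K\<ge>N. (f - Sm r x \<Gamma> d i1 i2) - Sm r x \<Gamma> e i2 (Suc K) \<in> ideal_pow M n"
        using f by blast
      have "f - Sm r x \<Gamma> c i1 (Suc K) \<in> ideal_pow M n" if K: "K \<ge> max N i2" for K
      proof -
        have iK: "i2 \<le> Suc K" using K by simp
        show ?thesis unfolding key[OF iK] using N K by (meson max.boundedE)
      qed
      then show ?thesis by blast
    qed
    then show ?thesis using cf infinity unfolding Rep_def c_def by simp
  qed
qed



lemma lift0: "lifting I \<sigma> \<Longrightarrow> (0::'a::comm_ring_1) \<in> range \<sigma>"
  unfolding lifting_def by (metis rangeI)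

lemma zero_rep:
  assumes s: "lifting (gen_ideal r x) \<sigma>" and f: "f \<in> ideal_pow (gen_ideal r x) i2"
  shows "Rep M r x \<Gamma> i1 (enat i2) \<sigma> f (\<lambda>_. 0)"
proof -
  have "Sm r x \<Gamma> (\<lambda>_. 0) i1 i2 = 0" by (rule Sm_zero) simp
  then show ?thesis using f lift0[OF s] unfolding Rep_def Cf_def by simp
qed

lemma imp1:
  fixes M :: "'a::comm_ring_1 set"
  assumes noeth: "noetherian_ring TYPE('a)" and loc: "local_ring TYPE('a)" and M: "maximal_ideal M"
    and i12: "i1 \<le> i2" and j: "enat i2 \<le> j"
    and E1: "expandable M r x \<Gamma> i1 (enat i2)" and E2: "expandable M r x \<Gamma> i1 j"
  shows "expandable M r x \<Gamma> i2 j"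
  unfolding exp_alt
proof (intro allI impI ballI)
  fix \<sigma> f assume s: "lifting (gen_ideal r x) \<sigma>" and f: "f \<in> ideal_pow (gen_ideal r x) i2"
  have f1: "f \<in> ideal_pow (gen_ideal r x) i1" using pow_anti[OF i12] f by blast
  obtain c where c: "Rep M r x \<Gamma> i1 j \<sigma> f c"
    and U2: "\<And>c'. Rep M r x \<Gamma> i1 j \<sigma> f c' \<Longrightarrow> Agr r \<Gamma> i1 j c c'"
    using E2[unfolded exp_alt] s f1 by blast
  obtain d where U1: "\<And>c'. Rep M r x \<Gamma> i1 (enat i2) \<sigma> f c' \<Longrightarrow> Agr r \<Gamma> i1 (enat i2) d c'"
    using E1[unfolded exp_alt] s f1 by blast
  have z: "Rep M r x \<Gamma> i1 (enat i2) \<sigma> f (\<lambda>_. 0)" by (rule zero_rep[OF s f])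
  have ct: "Rep M r x \<Gamma> i1 (enat i2) \<sigma> f c" by (rule trunc[OF noeth loc M i12 j c])
  have c0: "c u = 0" if "u \<in> \<Gamma>" "i1 \<le> mdeg r u" "mdeg r u < i2" for u
    using U1[OF z] U1[OF ct] that unfolding Agr_def by simp
  have "Sm r x \<Gamma> c i1 i2 = 0" by (rule Sm_zero) (rule c0)
  then have R: "Rep M r x \<Gamma> i2 j \<sigma> f c" using split_rep[OF i12 j c] by simp
  show "\<exists>c. Rep M r x \<Gamma> i2 j \<sigma> f c \<and> (\<forall>c'. Rep M r x \<Gamma> i2 j \<sigma> f c' \<longrightarrow> Agr r \<Gamma> i2 j c c')"
  proof (intro exI conjI allI impI)
    show "Rep M r x \<Gamma> i2 j \<sigma> f c" by (rule R)
  next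
    fix c' assume c': "Rep M r x \<Gamma> i2 j \<sigma> f c'"
    have "Sm r x \<Gamma> (\<lambda>_. 0) i1 i2 = 0" by (rule Sm_zero) simp
    then have c'': "Rep M r x \<Gamma> i2 j \<sigma> (f - Sm r x \<Gamma> (\<lambda>_. 0) i1 i2) c'" using c' by simp
    have "Agr r \<Gamma> i1 j c (\<lambda>u. if mdeg r u < i2 then 0 else c' u)"
      by (rule U2, rule comb[OF i12 j z c''])
    then show "Agr r \<Gamma> i2 j c c'" using i12 unfolding Agr_def by auto
  qed
qed

lemma imp2:
  fixes M :: "'a::comm_ring_1 set"
  assumes noeth: "noetherian_ring TYPE('a)" and loc: "local_ring TYPE('a)" and M: "maximal_ideal M"
    and i12: "i1 \<le> i2" and j: "enat i2 \<le> j"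
    and E1: "expandable M r x \<Gamma> i1 (enat i2)" and E3: "expandable M r x \<Gamma> i2 j"
  shows "expandable M r x \<Gamma> i1 j"
  unfolding exp_alt
proof (intro allI impI ballI)
  fix \<sigma> f assume s: "lifting (gen_ideal r x) \<sigma>" and f: "f \<in> ideal_pow (gen_ideal r x) i1"
  obtain d where d: "Rep M r x \<Gamma> i1 (enat i2) \<sigma> f d"
    and U1: "\<And>c'. Rep M r x \<Gamma> i1 (enat i2) \<sigma> f c' \<Longrightarrow> Agr r \<Gamma> i1 (enat i2) d c'"
    using E1[unfolded exp_alt] s f by blast
  define g where "g = f - Sm r x \<Gamma> d i1 i2"
  have g: "g \<in> ideal_pow (gen_ideal r x) i2" using d unfolding Rep_def g_def by simp
  obtain e where e: "Rep M r x \<Gamma> i2 j \<sigma> g e"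
    and U3: "\<And>c'. Rep M r x \<Gamma> i2 j \<sigma> g c' \<Longrightarrow> Agr r \<Gamma> i2 j e c'"
    using E3[unfolded exp_alt] s g by blast
  define c where "c = (\<lambda>u. if mdeg r u < i2 then d u else e u)"
  show "\<exists>c. Rep M r x \<Gamma> i1 j \<sigma> f c \<and> (\<forall>c'. Rep M r x \<Gamma> i1 j \<sigma> f c' \<longrightarrow> Agr r \<Gamma> i1 j c c')"
  proof (intro exI conjI allI impI)
    show "Rep M r x \<Gamma> i1 j \<sigma> f c" unfolding c_def by (rule comb[OF i12 j d e[unfolded g_def]])
  next
    fix c' assume c': "Rep M r x \<Gamma> i1 j \<sigma> f c'"
    have "Agr r \<Gamma> i1 (enat i2) d c'" by (rule U1, rule trunc[OF noeth loc M i12 j c'])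
    then have low: "c' u = d u" if "u \<in> \<Gamma>" "i1 \<le> mdeg r u" "mdeg r u < i2" for u
      using that unfolding Agr_def by simp
    have "Sm r x \<Gamma> c' i1 i2 = Sm r x \<Gamma> d i1 i2" by (rule Sm_cong) (rule low)
    then have "Rep M r x \<Gamma> i2 j \<sigma> g c'" using split_rep[OF i12 j c'] unfolding g_def by simp
    then have "Agr r \<Gamma> i2 j e c'" by (rule U3)
    then show "Agr r \<Gamma> i1 j c c'" using low unfolding Agr_def c_def by auto
  qed
qed

lemma imp3:
  fixes M :: "'a::comm_ring_1 set"
  assumes noeth: "noetherian_ring TYPE('a)" and loc: "local_ring TYPE('a)" and M: "maximal_ideal M"
    and i12: "i1 \<le> i2" and j: "enat i2 \<le> j"
    and E2: "expandable M r x \<Gamma> i1 j" and E3: "expandable M r x \<Gamma> i2 j"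
  shows "expandable M r x \<Gamma> i1 (enat i2)"
  unfolding exp_alt
proof (intro allI impI ballI)
  fix \<sigma> f assume s: "lifting (gen_ideal r x) \<sigma>" and f: "f \<in> ideal_pow (gen_ideal r x) i1"
  obtain c where c: "Rep M r x \<Gamma> i1 j \<sigma> f c"
    and U2: "\<And>c'. Rep M r x \<Gamma> i1 j \<sigma> f c' \<Longrightarrow> Agr r \<Gamma> i1 j c c'"
    using E2[unfolded exp_alt] s f by blast
  show "\<exists>c. Rep M r x \<Gamma> i1 (enat i2) \<sigma> f c \<and>
     (\<forall>c'. Rep M r x \<Gamma> i1 (enat i2) \<sigma> f c' \<longrightarrow> Agr r \<Gamma> i1 (enat i2) c c')"
  proof (intro exI conjI allI impI)
    show "Rep M r x \<Gamma> i1 (enat i2) \<sigma> f c" by (rule trunc[OF noeth loc M i12 j c])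
  next
    fix d assume d: "Rep M r x \<Gamma> i1 (enat i2) \<sigma> f d"
    define g where "g = f - Sm r x \<Gamma> d i1 i2"
    have g: "g \<in> ideal_pow (gen_ideal r x) i2" using d unfolding Rep_def g_def by simp
    obtain e where e: "Rep M r x \<Gamma> i2 j \<sigma> g e"
      using E3[unfolded exp_alt] s g by blast
    have "Agr r \<Gamma> i1 j c (\<lambda>u. if mdeg r u < i2 then d u else e u)"
      by (rule U2, rule comb[OF i12 j d e[unfolded g_def]])
    then show "Agr r \<Gamma> i1 (enat i2) c d" using j unfolding Agr_def
      by (metis enat_ord_simps(2) order_less_le_trans)
  qed
qed

theorem lemma3p7:
  fixes M :: "'a::comm_ring_1 set"
    and r :: nat and x :: "nat \<Rightarrow> 'a" and \<Gamma> :: "(nat \<Rightarrow> nat) set"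
    and i1 i2 :: nat and i3 :: enat
  assumes noeth: "noetherian_ring TYPE('a)"
    and loc: "local_ring TYPE('a)"
    and M: "maximal_ideal M"
    and \<Gamma>: "\<Gamma> \<subseteq> monomials r"
    and i1: "0 < i1" and i12: "i1 < i2" and i23: "enat i2 < i3"
    and compl: "i3 = \<infinity> \<Longrightarrow> adic_complete M"
  shows "(expandable M r x \<Gamma> i1 (enat i2) \<and> expandable M r x \<Gamma> i1 i3 \<longrightarrow> expandable M r x \<Gamma> i2 i3)
       \<and> (expandable M r x \<Gamma> i1 (enat i2) \<and> expandable M r x \<Gamma> i2 i3 \<longrightarrow> expandable M r x \<Gamma> i1 i3)
       \<and> (expandable M r x \<Gamma> i1 i3 \<and> expandable M r x \<Gamma> i2 i3 \<longrightarrow> expandable M r x \<Gamma> i1 (enat i2))"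
proof -
  have a: "i1 \<le> i2" using i12 by simp
  have b: "enat i2 \<le> i3" using i23 by simp
  show ?thesis
    using imp1[OF noeth loc M a b] imp2[OF noeth loc M a b] imp3[OF noeth loc M a b] by blast
qed


end
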